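(* There is an absolute constant $C$ such that the following holds. Let $n\in\mathbb N$, $c>0$, and let $w\in\mathcal W$ satisfy $|w|\le c$ and be measurable with respect to the product $\sigma$-algebra $\mathcal A_n^*\times\mathcal A_n^*$, where $\mathcal A_n^*$ is the (finite) algebra of subsets of $[0,1]$ generated by the intervals $I_i=[\frac in,\frac{i+1}n]$, $0\le i\le n-1$ (so $w$ is constant on each $I_i\times I_j$ up to boundaries). Then $$\Big|\sup_{A\in\mathcal A}\Gamma(w,A)-\max_{A\in\mathcal A_n^*}\Gamma(w,A)\Big|\le \frac{Cc}{n}.$$
   Context: $\mathcal W$ is the space of bounded symmetric measurable functions $[0,1]^2\to\mathbb R$; $\mathcal A$ is the collection of Lebesgue measurable subsets of $[0,1]$. With $[x]_+=\max(x,0)$, for $w\in\mathcal W$ and $A\in\mathcal A$, $$\Gamma(w,A)=\iint_{y<z}\Big[\int_{A\cap[0,y]}(w(x,z)-w(x,y))\,dx\Big]_+dy\,dz+\iint_{y<z}\Big[\int_{A\cap[z,1]}(w(x,y)-w(x,z))\,dx\Big]_+dy\,dz,$$ and $\Gamma(w)=\sup_{A\in\mathcal A}\Gamma(w,A)$. *)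

theory Defs
  imports "HOL-Analysis.Analysis"
begin

text \<open>The space W: bounded, symmetric, (Lebesgue) measurable functions on the unit square.
  Values outside the unit square are irrelevant.\<close>
definition graphonW :: "(real \<Rightarrow> real \<Rightarrow> real) set" where
  "graphonW = {w. (\<forall>x\<in>{0..1}. \<forall>y\<in>{0..1}. w x y = w y x)
                 \<and> (\<exists>B. \<forall>x\<in>{0..1}. \<forall>y\<in>{0..1}. \<bar>w x y\<bar> \<le> B)
                 \<and> (\<lambda>(x,y). w x y) \<in> borel_measurable (restrict_space lebesgue ({0..1} \<times> {0..1}))}"

definition measSets :: "real set set" where
  "measSets = {A. A \<in> sets lebesgue \<and> A \<subseteq> {0..1}}"

definition GammaW :: "(real \<Rightarrow> real \<Rightarrow> real) \<Rightarrow> real set \<Rightarrow> real" where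
  "GammaW w A =
     (LINT p : {(y,z). 0 \<le> y \<and> y < z \<and> z \<le> 1} | lebesgue.
        max 0 (LINT x : A \<inter> {0..fst p} | lebesgue. (w x (snd p) - w x (fst p))))
   + (LINT p : {(y,z). 0 \<le> y \<and> y < z \<and> z \<le> 1} | lebesgue.
        max 0 (LINT x : A \<inter> {snd p..1} | lebesgue. (w x (fst p) - w x (snd p))))"

definition GammaSup :: "(real \<Rightarrow> real \<Rightarrow> real) \<Rightarrow> real" where
  "GammaSup w = (SUP A\<in>measSets. GammaW w A)"

definition intervalsN :: "nat \<Rightarrow> real set set" where
  "intervalsN n = {{real i / real n .. (real i + 1) / real n} | i. i < n}"

text \<open>The (finite) algebra of subsets of [0,1] generated by the intervals I_i
  (for a finite generating family the generated algebra equals the generated sigma-algebra).\<close>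
definition algN :: "nat \<Rightarrow> real set set" where
  "algN n = sigma_sets {0..1} (intervalsN n)"

definition algN_measure :: "nat \<Rightarrow> real measure" where
  "algN_measure n = sigma {0..1} (intervalsN n)"

end

theory Submission
  imports Defs
begin

lemma m_Icc: "l \<le> u \<Longrightarrow> measure lebesgue {l..u::real} = u - l"
  by (simp add: measure_def emeasure_completion)
lemma e_Icc: "emeasure lebesgue {l..u::real} < \<infinity>"
  by (simp add: emeasure_completion emeasure_lborel_Icc_eq)
lemma e_sub: "S \<subseteq> {l..u::real} \<Longrightarrow> S \<in> sets lebesgue \<Longrightarrow> emeasure lebesgue S < \<infinity>"
  by (rule order_le_less_trans[OF emeasure_mono e_Icc]) auto

definition Jn :: "nat \<Rightarrow> nat \<Rightarrow> real set" where
  "Jn n i = {real i / real n <..< (real i + 1) / real n}"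
definition IS :: "nat \<Rightarrow> real \<Rightarrow> real \<Rightarrow> nat set" where
  "IS n s t = {i. i < n \<and> s \<le> real i / real n \<and> (real i + 1) / real n \<le> t}"
definition Pts :: "nat \<Rightarrow> real set" where
  "Pts n = (\<lambda>j. real j / real n) ` {..n}"

lemma Jn_disj:
  assumes "n \<ge> 1" "x \<in> Jn n i" "x \<in> Jn n j" shows "i = j"
proof -
  have np: "real n > 0" using assms by simp
  have "real i / real n < (real j + 1) / real n" "real j / real n < (real i + 1) / real n"
    using assms(2,3) by (auto simp: Jn_def)
  hence "real i < real j + 1" "real j < real i + 1" using np by (simp_all add: divide_less_cancel)
  thus ?thesis by linarith
qed

lemma Jn_cover:
  assumes n: "n \<ge> 1" and x: "0 \<le> x" "x \<le> 1" "x \<notin> Pts n"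
  shows "\<exists>i<n. x \<in> Jn n i"
proof -
  have np: "real n > 0" using n by simp
  define k where "k = nat \<lfloor>real n * x\<rfloor>"
  have k0: "\<lfloor>real n * x\<rfloor> \<ge> 0" using x np by simp
  have kk: "real k = of_int \<lfloor>real n * x\<rfloor>" using k0 by (simp add: k_def)
  have a: "real k \<le> real n * x" "real n * x < real k + 1" using kk by linarith+
  have ne: "real k \<noteq> real n * x"
  proof
    assume e: "real k = real n * x"
    hence "x = real k / real n" using np by (simp add: field_simps)
    moreover have "k \<le> n"
    proof -
      have "real n * x \<le> real n" using x np by simp
      thus ?thesis using e by simp
    qed
    ultimately show False using x(3) by (auto simp: Pts_def)
  qed
  have kn: "k < n"
  proof -
    have "real k < real n" using a ne x np
      by (smt (verit) mult_left_le)
    thus ?thesis by simp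
  qed
  have "real k / real n < x" "x < (real k + 1) / real n"
    using a ne np by (simp_all add: field_simps)
  thus ?thesis using kn by (auto simp: Jn_def)
qed

lemma Pts_null: "Pts n \<in> null_sets lebesgue"
proof -
  have "finite (Pts n)" by (simp add: Pts_def)
  hence "Pts n \<in> null_sets lborel" by (rule finite_imp_null_set_lborel)
  thus ?thesis by (rule null_sets_completionI)
qed

lemma Jn_sets[measurable]: "Jn n i \<in> sets lebesgue" by (simp add: Jn_def)

lemma approx_int:
  fixes h :: "real \<Rightarrow> real"
  assumes n: "n \<ge> 1" and st: "0 \<le> s" "t \<le> 1" and A: "A \<in> sets lebesgue"
    and hm: "h \<in> borel_measurable lebesgue" and hb: "\<And>x. x \<in> {0..1} \<Longrightarrow> \<bar>h x\<bar> \<le> B"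
    and hH: "\<And>i x. i < n \<Longrightarrow> x \<in> Jn n i \<Longrightarrow> h x = H i"
  shows "\<bar>(LINT x:(A \<inter> {s..t})|lebesgue. h x) - (\<Sum>i\<in>IS n s t. H i * measure lebesgue (A \<inter> Jn n i))\<bar> \<le> 2 * B / real n"
proof -
  have np: "real n > 0" using n by simp
  define I where "I = IS n s t"
  define R where "R = {s..t} - (\<Union>i\<in>I. Jn n i)"
  have finI: "finite I" unfolding I_def IS_def by simp
  have In: "i \<in> I \<Longrightarrow> i < n" for i by (simp add: I_def IS_def)
  have B0: "0 \<le> B" using hb[of 0] by simp
  have sub: "Jn n i \<subseteq> {s..t}" if "i \<in> I" for i
    using that by (auto simp: I_def IS_def Jn_def)
  have pw: "indicator (A \<inter> {s..t}) x *\<^sub>R h x = (\<Sum>i\<in>I. indicator (A \<inter> Jn n i) x * H i) + indicator (A \<inter> R) x * h x" for x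
  proof (cases "\<exists>j\<in>I. x \<in> Jn n j")
    case True
    then obtain j where j: "j \<in> I" "x \<in> Jn n j" by blast
    have "(\<Sum>i\<in>I. indicator (A \<inter> Jn n i) x * H i) = indicator (A \<inter> Jn n j) x * H j"
      using j finI Jn_disj[OF n] by (intro sum.remove[THEN trans]) (auto intro!: sum.neutral simp: indicator_def)
    moreover have "x \<notin> R" using j by (auto simp: R_def)
    moreover have "x \<in> {s..t}" using sub j by blast
    moreover have "h x = H j" using hH[OF In[OF j(1)] j(2)] .
    ultimately show ?thesis using j by (simp add: indicator_def)
  next
    case False
    hence "(\<Sum>i\<in>I. indicator (A \<inter> Jn n i) x * H i) = 0" by (auto intro!: sum.neutral simp: indicator_def)
    moreover have "indicator (A \<inter> {s..t}) x = (indicator (A \<inter> R) x :: real)"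
      using False by (auto simp: R_def indicator_def)
    ultimately show ?thesis by simp
  qed
  have Rm[measurable]: "R \<in> sets lebesgue" unfolding R_def using finI by (intro sets.Diff sets.finite_UN) auto
  have int1: "integrable lebesgue (\<lambda>x. indicator (A \<inter> Jn n i) x * H i)" for i
  proof -
    have "emeasure lebesgue (A \<inter> Jn n i) < \<infinity>"
      by (rule e_sub[of _ "real i / real n" "(real i + 1) / real n"]) (auto simp: Jn_def A)
    hence "integrable lebesgue (indicator (A \<inter> Jn n i) :: real \<Rightarrow> real)" using A by auto
    thus ?thesis by simp
  qed
  have ARf: "emeasure lebesgue (A \<inter> R) < \<infinity>"
    by (rule e_sub[of _ s t]) (use A Rm in \<open>auto simp: R_def\<close>)
  have iB: "integrable lebesgue (\<lambda>x. B * indicator (A \<inter> R) x :: real)" using ARf A Rm by auto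
  have int2: "integrable lebesgue (\<lambda>x. indicator (A \<inter> R) x * h x)"
  proof -
    have i1: "integrable lebesgue (\<lambda>x. B * indicator (A \<inter> R) x :: real)" using ARf A Rm by auto
    have ARm: "A \<inter> R \<in> sets lebesgue" using A Rm by simp
    have m: "(\<lambda>x. indicator (A \<inter> R) x * h x) \<in> borel_measurable lebesgue"
      by (intro borel_measurable_times borel_measurable_indicator ARm hm)
    have ae: "AE x in lebesgue. norm (indicator (A \<inter> R) x * h x) \<le> norm (B * indicator (A \<inter> R) x :: real)"
      using hb st B0 by (auto simp: indicator_def R_def abs_mult)
    show ?thesis by (rule Bochner_Integration.integrable_bound[OF i1 m ae])
  qed
  have eq: "(LINT x:(A \<inter> {s..t})|lebesgue. h x) = (\<Sum>i\<in>I. H i * measure lebesgue (A \<inter> Jn n i)) + (\<integral>x. indicator (A \<inter> R) x * h x \<partial>lebesgue)"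
  proof -
    have "(LINT x:(A \<inter> {s..t})|lebesgue. h x) = (\<integral>x. (\<Sum>i\<in>I. indicator (A \<inter> Jn n i) x * H i) + indicator (A \<inter> R) x * h x \<partial>lebesgue)"
      unfolding set_lebesgue_integral_def pw ..
    also have "\<dots> = (\<integral>x. (\<Sum>i\<in>I. indicator (A \<inter> Jn n i) x * H i) \<partial>lebesgue) + (\<integral>x. indicator (A \<inter> R) x * h x \<partial>lebesgue)"
      by (rule Bochner_Integration.integral_add[OF Bochner_Integration.integrable_sum int2]) (use int1 in auto)
    also have "(\<integral>x. (\<Sum>i\<in>I. indicator (A \<inter> Jn n i) x * H i) \<partial>lebesgue) = (\<Sum>i\<in>I. (\<integral>x. indicator (A \<inter> Jn n i) x * H i \<partial>lebesgue))"
      using int1 by (intro Bochner_Integration.integral_sum) auto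
    also have "\<dots> = (\<Sum>i\<in>I. H i * measure lebesgue (A \<inter> Jn n i))"
      by (simp add: mult.commute)
    finally show ?thesis .
  qed
  have rb: "\<bar>\<integral>x. indicator (A \<inter> R) x * h x \<partial>lebesgue\<bar> \<le> B * measure lebesgue (A \<inter> R)"
  proof -
    have "\<bar>\<integral>x. indicator (A \<inter> R) x * h x \<partial>lebesgue\<bar> \<le> (\<integral>x. \<bar>indicator (A \<inter> R) x * h x\<bar> \<partial>lebesgue)"
      by (rule integral_abs_bound)
    also have "\<dots> \<le> (\<integral>x. B * indicator (A \<inter> R) x \<partial>lebesgue)"
      by (rule Bochner_Integration.integral_mono[OF integrable_abs[OF int2] iB]) (use hb st B0 in \<open>auto simp: indicator_def R_def abs_mult\<close>)
    also have "\<dots> = B * measure lebesgue (A \<inter> R)" by simp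
    finally show ?thesis .
  qed
  have mR: "measure lebesgue (A \<inter> R) \<le> 2 / real n"
  proof -
    let ?U = "({s..s + 1/real n} \<union> {t - 1/real n..t}) \<union> Pts n"
    have "A \<inter> R \<subseteq> ?U"
    proof
      fix x assume x: "x \<in> A \<inter> R"
      show "x \<in> ?U"
      proof (cases "x \<in> Pts n")
        case False
        have x01: "0 \<le> x" "x \<le> 1" "s \<le> x" "x \<le> t" using x st by (auto simp: R_def)
        obtain i where i: "i < n" "x \<in> Jn n i" using Jn_cover[OF n x01(1,2) False] by blast
        have "i \<notin> I" using x i by (auto simp: R_def)
        hence "\<not> s \<le> real i / real n \<or> \<not> (real i + 1) / real n \<le> t" using i by (auto simp: I_def IS_def)
        moreover have "x < real i / real n + 1 / real n" "real i / real n < x"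
          using i(2) by (auto simp: Jn_def add_divide_distrib)
        moreover have "(real i + 1) / real n = real i / real n + 1 / real n" by (simp add: add_divide_distrib)
        ultimately show ?thesis using x01 by auto
      qed simp
    qed
    moreover have "?U \<in> fmeasurable lebesgue"
    proof -
      have "1 / real n \<le> 1" using n by simp
      moreover have pj: "\<And>j. j \<le> n \<Longrightarrow> 0 \<le> real j / real n \<and> real j / real n \<le> 1" using np by (auto simp: divide_le_eq_1)
      ultimately have "?U \<subseteq> {-(\<bar>s\<bar>+\<bar>t\<bar>+2) .. \<bar>s\<bar>+\<bar>t\<bar>+2}"
        by (auto simp: Pts_def) (smt (verit) pj)+
      moreover have "?U \<in> sets lebesgue" using Pts_null[of n] by (intro sets.Un) auto
      ultimately show ?thesis using e_sub by (auto simp: fmeasurable_def)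
    qed
    moreover have "A \<inter> R \<in> sets lebesgue" using A by simp
    ultimately have "measure lebesgue (A \<inter> R) \<le> measure lebesgue ?U"
      by (intro measure_mono_fmeasurable)
    also have "\<dots> = measure lebesgue ({s..s + 1/real n} \<union> {t - 1/real n..t})"
      using Pts_null by (intro measure_Un_null_set) auto
    also have "\<dots> \<le> measure lebesgue {s..s + 1/real n} + measure lebesgue {t - 1/real n..t}"
      by (intro measure_Un_le) auto
    also have "\<dots> = 2 / real n" using np by (simp add: m_Icc)
    finally show ?thesis .
  qed
  have "\<bar>(LINT x:(A \<inter> {s..t})|lebesgue. h x) - (\<Sum>i\<in>IS n s t. H i * measure lebesgue (A \<inter> Jn n i))\<bar>
     = \<bar>\<integral>x. indicator (A \<inter> R) x * h x \<partial>lebesgue\<bar>" using eq by (simp add: I_def)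
  also have "\<dots> \<le> B * (2 / real n)" using rb mR B0 by (meson mult_left_mono order_trans)
  finally show ?thesis by (simp add: mult.commute)
qed
definition eqvn :: "nat \<Rightarrow> real \<Rightarrow> real \<Rightarrow> bool" where
  "eqvn n x y = (\<forall>G\<in>intervalsN n. (x \<in> G \<longleftrightarrow> y \<in> G))"

definition mid :: "nat \<Rightarrow> nat \<Rightarrow> real" where
  "mid n i = (real i + 1/2) / real n"

lemma intervalsN_sub: "intervalsN n \<subseteq> Pow {0..1}"
proof -
  have "{real i / real n .. (real i + 1) / real n} \<subseteq> {0..1}" if "i < n" for i
  proof -
    have "real i + 1 \<le> real n" using that by simp
    hence "(real i + 1) / real n \<le> 1" using that by (simp add: divide_le_eq_1)
    thus ?thesis by auto
  qed
  thus ?thesis unfolding intervalsN_def by blast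
qed

lemma sets_algN: "sets (algN_measure n) = algN n"
  unfolding algN_measure_def algN_def using intervalsN_sub by (rule sets_measure_of)

lemma space_algN: "space (algN_measure n) = {0..1}"
  unfolding algN_measure_def using intervalsN_sub by (rule space_measure_of)

lemma finite_intervalsN: "finite (intervalsN n)"
proof -
  have "intervalsN n = (\<lambda>i. {real i / real n .. (real i + 1) / real n}) ` {..<n}"
    unfolding intervalsN_def by auto
  thus ?thesis by simp
qed

lemma sat1:
  assumes "S \<in> sigma_sets {0..1} (intervalsN n)"
  shows "\<forall>x y. x \<in> S \<longrightarrow> y \<in> {0..1} \<longrightarrow> eqvn n x y \<longrightarrow> y \<in> S"
  using assms
proof (induction rule: sigma_sets.induct)
  case (Basic a)
  then show ?case by (auto simp: eqvn_def)
next
  case Empty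
  then show ?case by simp
next
  case (Compl a)
  then show ?case by (auto simp: eqvn_def)
next
  case (Union A)
  then show ?case by blast
qed

lemma sat2:
  assumes "S \<in> sets (algN_measure n \<Otimes>\<^sub>M algN_measure n)"
  shows "\<forall>p q. p \<in> S \<longrightarrow> q \<in> {0..1} \<times> {0..1} \<longrightarrow> eqvn n (fst p) (fst q) \<longrightarrow> eqvn n (snd p) (snd q) \<longrightarrow> q \<in> S"
proof -
  have "S \<in> sigma_sets ({0..1} \<times> {0..1}) {a \<times> b | a b. a \<in> algN n \<and> b \<in> algN n}"
    using assms by (simp add: sets_pair_measure sets_algN space_algN)
  thus ?thesis
  proof (induction rule: sigma_sets.induct)
    case (Basic a)
    then obtain a1 a2 where a: "a = a1 \<times> a2" "a1 \<in> algN n" "a2 \<in> algN n" by blast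
    show ?case
    proof (intro allI impI)
      fix p q :: "real \<times> real"
      assume h: "p \<in> a" "q \<in> {0..1} \<times> {0..1}" "eqvn n (fst p) (fst q)" "eqvn n (snd p) (snd q)"
      have "fst q \<in> a1" using sat1[of a1 n] a h unfolding algN_def by (auto simp: mem_Times_iff)
      moreover have "snd q \<in> a2" using sat1[of a2 n] a h unfolding algN_def by (auto simp: mem_Times_iff)
      ultimately show "q \<in> a" using a by (simp add: mem_Times_iff)
    qed
  next
    case Empty
    then show ?case by simp
  next
    case (Compl a)
    have sym: "eqvn n x y \<Longrightarrow> eqvn n y x" for x y by (auto simp: eqvn_def)
    show ?case
    proof (intro allI impI)
      fix p q :: "real \<times> real"
      assume h: "p \<in> {0..1} \<times> {0..1} - a" "q \<in> {0..1} \<times> {0..1}" "eqvn n (fst p) (fst q)" "eqvn n (snd p) (snd q)"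
      show "q \<in> {0..1} \<times> {0..1} - a"
      proof (rule ccontr)
        assume "q \<notin> {0..1} \<times> {0..1} - a"
        hence "q \<in> a" using h by blast
        hence "p \<in> a" using Compl.IH h sym by blast
        thus False using h by blast
      qed
    qed
  next
    case (Union A)
    then show ?case by blast
  qed
qed

lemma w_const:
  assumes wm: "(\<lambda>(x,y). w x y) \<in> borel_measurable (algN_measure n \<Otimes>\<^sub>M algN_measure n)"
    and x: "x \<in> {0..1}" "x' \<in> {0..1}" "eqvn n x x'" and y: "y \<in> {0..1}" "y' \<in> {0..1}" "eqvn n y y'"
  shows "w x y = (w x' y' :: real)"
proof -
  let ?S = "(\<lambda>(x,y). w x y) -` {w x y} \<inter> space (algN_measure n \<Otimes>\<^sub>M algN_measure n)"
  have "?S \<in> sets (algN_measure n \<Otimes>\<^sub>M algN_measure n)"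
    using wm by (rule measurable_sets) simp
  from sat2[OF this, rule_format, of "(x,y)" "(x',y')"] x y
  show ?thesis by (auto simp: space_pair_measure space_algN)
qed

lemma Jn_Icc_iff:
  assumes n: "n \<ge> 1" and x: "x \<in> Jn n i"
  shows "x \<in> {real j / real n .. (real j + 1) / real n} \<longleftrightarrow> j = i"
proof
  have np: "real n > 0" using n by simp
  assume "x \<in> {real j / real n .. (real j + 1) / real n}"
  hence "real j / real n < (real i + 1) / real n" "real i / real n < (real j + 1) / real n"
    using x by (auto simp: Jn_def)
  hence "real j < real i + 1" "real i < real j + 1" using np by (simp_all add: divide_less_cancel)
  thus "j = i" by linarith
qed (use x in \<open>auto simp: Jn_def\<close>)

lemma Jn_eqvn:
  assumes n: "n \<ge> 1" and "x \<in> Jn n i" "y \<in> Jn n i"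
  shows "eqvn n x y"
  using Jn_Icc_iff[OF n assms(2)] Jn_Icc_iff[OF n assms(3)] by (auto simp: eqvn_def intervalsN_def)

lemma mid_Jn: "n \<ge> 1 \<Longrightarrow> mid n i \<in> Jn n i"
  by (auto simp: mid_def Jn_def divide_strict_right_mono)

lemma Jn_01: "n \<ge> 1 \<Longrightarrow> i < n \<Longrightarrow> Jn n i \<subseteq> {0..1}"
proof -
  assume n: "n \<ge> 1" "i < n"
  have "real i + 1 \<le> real n" using n by simp
  hence "(real i + 1) / real n \<le> 1" using n by (simp add: divide_le_eq_1)
  thus ?thesis by (auto simp: Jn_def) (smt (verit) divide_nonneg_nonneg of_nat_0_le_iff)
qed

lemma finite_algN: "finite (algN n)"
proof -
  define sig where "sig x = {G \<in> intervalsN n. x \<in> G}" for x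
  have rep: "S = {x \<in> {0..1}. sig x \<in> sig ` S}" if S: "S \<in> algN n" for S
  proof
    have "S \<subseteq> {0..1}" using S sigma_sets_into_sp[OF intervalsN_sub] unfolding algN_def by blast
    thus "S \<subseteq> {x \<in> {0..1}. sig x \<in> sig ` S}" by auto
  next
    show "{x \<in> {0..1}. sig x \<in> sig ` S} \<subseteq> S"
    proof safe
      fix x y assume h: "x \<in> {0..1}" "y \<in> S" "sig x = sig y"
      have "eqvn n y x" using h(3) by (auto simp: eqvn_def sig_def set_eq_iff)
      thus "x \<in> S" using sat1[of S n] S h unfolding algN_def by blast
    qed
  qed
  have "inj_on (\<lambda>S. sig ` S) (algN n)"
    by (rule inj_onI) (metis rep)
  moreover have "(\<lambda>S. sig ` S) ` algN n \<subseteq> Pow (Pow (intervalsN n))" by (auto simp: sig_def)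
  moreover have "finite (Pow (Pow (intervalsN n)))" using finite_intervalsN by simp
  ultimately show ?thesis by (meson finite_imageD finite_subset)
qed

lemma algN_measSets: "algN n \<subseteq> measSets"
proof
  fix S assume S: "S \<in> algN n"
  have "S \<subseteq> {0..1}" using S sigma_sets_into_sp[OF intervalsN_sub] unfolding algN_def by blast
  moreover have "S \<in> sets lebesgue" using S unfolding algN_def
  proof (induction rule: sigma_sets.induct)
    case (Basic a) then show ?case by (auto simp: intervalsN_def)
  next
    case (Compl a) then show ?case by auto
  qed auto
  ultimately show "S \<in> measSets" by (simp add: measSets_def)
qed

definition VS :: "nat \<Rightarrow> nat set \<Rightarrow> real set" where
  "VS n K = (\<Union>i\<in>K. {real i / real n .. (real i + 1) / real n})"

lemma VS_algN: "K \<subseteq> {..<n} \<Longrightarrow> VS n K \<in> algN n"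
proof -
  assume K: "K \<subseteq> {..<n}"
  have "finite K" using K finite_subset by blast
  moreover have "{real i / real n .. (real i + 1) / real n} \<in> sets (algN_measure n)" if "i \<in> K" for i
    using that K unfolding sets_algN algN_def by (intro sigma_sets.Basic) (auto simp: intervalsN_def)
  ultimately have "VS n K \<in> sets (algN_measure n)" unfolding VS_def by (intro sets.finite_UN) auto
  thus ?thesis by (simp add: sets_algN)
qed

lemma VS_Jn:
  assumes n: "n \<ge> 1" "i < n"
  shows "measure lebesgue (VS n K \<inter> Jn n i) = (if i \<in> K then 1 / real n else 0)"
proof -
  have "VS n K \<inter> Jn n i = (if i \<in> K then Jn n i else {})"
    using Jn_Icc_iff[OF n(1)] by (auto simp: VS_def)
  moreover have "measure lebesgue (Jn n i) = 1 / real n"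
  proof -
    have e: "(real i + 1) / real n - real i / real n = 1 / real n" by (simp add: diff_divide_distrib[symmetric])
    show ?thesis using e by (simp add: Jn_def measure_def emeasure_completion divide_right_mono)
  qed
  ultimately show ?thesis by simp
qed

lemma algN_borel: "S \<in> algN n \<Longrightarrow> S \<in> sets borel"
  unfolding algN_def
proof (induction rule: sigma_sets.induct)
  case (Basic a) then show ?case by (auto simp: intervalsN_def)
next
  case (Compl a) then show ?case by auto
qed auto

lemma bp: "A \<in> sets (borel \<Otimes>\<^sub>M borel) \<Longrightarrow> A \<in> sets (borel :: (real \<times> real) measure)"
  by (metis borel_prod)

lemma pair_algN_borel:
  assumes "S \<in> sets (algN_measure n \<Otimes>\<^sub>M algN_measure n)"
  shows "S \<in> sets (borel :: (real \<times> real) measure)"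
proof -
  have "S \<in> sigma_sets ({0..1} \<times> {0..1}) {a \<times> b | a b. a \<in> algN n \<and> b \<in> algN n}"
    using assms by (simp add: sets_pair_measure sets_algN space_algN)
  thus ?thesis
  proof (induction rule: sigma_sets.induct)
    case (Basic a)
    then obtain a1 a2 where a: "a = a1 \<times> a2" "a1 \<in> algN n" "a2 \<in> algN n" by blast
    have "a1 \<times> a2 \<in> sets (borel \<Otimes>\<^sub>M borel)" using a algN_borel by (intro pair_measureI) auto
    thus ?case using a by (simp add: bp)
  next
    case (Compl a)
    have "{0..1::real} \<times> {0..1::real} \<in> sets (borel \<Otimes>\<^sub>M borel)" by (intro pair_measureI) auto
    hence "{0..1::real} \<times> {0..1::real} \<in> sets borel" by (rule bp)
    thus ?case using Compl by auto
  qed auto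
qed

definition wext :: "(real \<Rightarrow> real \<Rightarrow> real) \<Rightarrow> real \<Rightarrow> real \<Rightarrow> real" where
  "wext w x y = (if x \<in> {0..1} \<and> y \<in> {0..1} then w x y else 0)"

lemma wext_meas:
  assumes wm: "(\<lambda>(x,y). w x y) \<in> borel_measurable (algN_measure n \<Otimes>\<^sub>M algN_measure n)"
  shows "(\<lambda>p. wext w (fst p) (snd p)) \<in> borel_measurable borel"
proof -
  let ?\<Omega> = "{0..1::real} \<times> {0..1::real}"
  have \<Omega>b: "?\<Omega> \<in> sets (borel :: (real \<times> real) measure)"
  proof -
    have "?\<Omega> \<in> sets (borel \<Otimes>\<^sub>M borel)" by (intro pair_measureI) auto
    thus ?thesis by (rule bp)
  qed
  have "(\<lambda>p. w (fst p) (snd p)) \<in> borel_measurable (restrict_space borel ?\<Omega>)"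
  proof (rule measurableI)
    fix A :: "real set" assume A: "A \<in> sets borel"
    have "(\<lambda>(x,y). w x y) -` A \<inter> space (algN_measure n \<Otimes>\<^sub>M algN_measure n) \<in> sets (algN_measure n \<Otimes>\<^sub>M algN_measure n)"
      using wm A by (rule measurable_sets)
    moreover have "(\<lambda>(x,y). w x y) -` A \<inter> space (algN_measure n \<Otimes>\<^sub>M algN_measure n) = (\<lambda>p. w (fst p) (snd p)) -` A \<inter> ?\<Omega>"
      by (auto simp: space_pair_measure space_algN)
    ultimately have P: "(\<lambda>p. w (fst p) (snd p)) -` A \<inter> ?\<Omega> \<in> sets borel"
      using pair_algN_borel by metis
    show "(\<lambda>p. w (fst p) (snd p)) -` A \<inter> space (restrict_space borel ?\<Omega>) \<in> sets (restrict_space borel ?\<Omega>)"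
      using P by (auto simp: space_restrict_space sets_restrict_space)
  qed simp
  hence "(\<lambda>p. indicator ?\<Omega> p *\<^sub>R w (fst p) (snd p)) \<in> borel_measurable borel"
    using \<Omega>b by (subst (asm) borel_measurable_restrict_space_iff) auto
  moreover have "(\<lambda>p. indicator ?\<Omega> p *\<^sub>R w (fst p) (snd p)) = (\<lambda>p. wext w (fst p) (snd p))"
    by (auto simp: fun_eq_iff wext_def indicator_def mem_Times_iff)
  ultimately show ?thesis by simp
qed

lemma sf_leb: "sigma_finite_measure (lebesgue :: real measure)"
proof
  obtain C where C: "countable C" "C \<subseteq> sets (lborel::real measure)" "\<Union>C = space lborel" "\<forall>a\<in>C. emeasure lborel a \<noteq> \<infinity>"
    using lborel.sigma_finite_countable by blast
  show "\<exists>A. countable A \<and> A \<subseteq> sets (lebesgue::real measure) \<and> \<Union> A = space lebesgue \<and> (\<forall>a\<in>A. emeasure lebesgue a \<noteq> \<infinity>)"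
    using C by (intro exI[of _ C]) (auto simp: emeasure_completion)
qed

lemma fst_leb: "fst \<in> borel_measurable (lebesgue :: (real\<times>real) measure)"
proof -
  have "fst \<in> borel_measurable (borel :: (real\<times>real) measure)" by (simp add: borel_measurable_continuous_onI continuous_on_fst)
  hence "fst \<in> borel_measurable (lborel :: (real\<times>real) measure)" by simp
  thus ?thesis by (rule measurable_completion)
qed
lemma snd_leb: "snd \<in> borel_measurable (lebesgue :: (real\<times>real) measure)"
proof -
  have "snd \<in> borel_measurable (borel :: (real\<times>real) measure)" by (simp add: borel_measurable_continuous_onI continuous_on_snd)
  hence "snd \<in> borel_measurable (lborel :: (real\<times>real) measure)" by simp
  thus ?thesis by (rule measurable_completion)
qed
lemma id_leb: "(\<lambda>x. x) \<in> borel_measurable (lebesgue :: real measure)"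
  using id_borel_measurable_lebesgue by (simp add: id_def)

lemma borel_leb: "g \<in> borel_measurable (borel :: real measure) \<Longrightarrow> g \<in> borel_measurable lebesgue"
proof -
  assume "g \<in> borel_measurable (borel :: real measure)"
  hence "g \<in> borel_measurable (lborel :: real measure)" by simp
  thus ?thesis by (rule measurable_completion)
qed

lemma comp_fst_leb: "g \<in> borel_measurable (borel :: real measure) \<Longrightarrow> (\<lambda>p::real\<times>real. g (fst p)) \<in> borel_measurable lebesgue"
  using measurable_comp[OF fst_leb, of g borel] by (simp add: o_def)
lemma comp_snd_leb: "g \<in> borel_measurable (borel :: real measure) \<Longrightarrow> (\<lambda>p::real\<times>real. g (snd p)) \<in> borel_measurable lebesgue"
  using measurable_comp[OF snd_leb, of g borel] by (simp add: o_def)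

lemma wm2: "(\<lambda>p. W (fst p) (snd p)) \<in> borel_measurable (borel :: (real\<times>real) measure) \<Longrightarrow>
    (\<lambda>p. W (fst p) (snd p) :: real) \<in> borel_measurable (borel \<Otimes>\<^sub>M borel)"
  by (metis borel_prod)

lemma W_sec1:
  assumes "(\<lambda>p. W (fst p) (snd p)) \<in> borel_measurable (borel :: (real\<times>real) measure)"
  shows "(\<lambda>x. W x b :: real) \<in> borel_measurable borel"
proof -
  have "(\<lambda>x::real. (x, b)) \<in> borel \<rightarrow>\<^sub>M (borel \<Otimes>\<^sub>M borel)" by (intro measurable_Pair) auto
  from measurable_comp[OF this wm2[OF assms]] show ?thesis by (simp add: o_def)
qed
lemma W_sec2:
  assumes "(\<lambda>p. W (fst p) (snd p)) \<in> borel_measurable (borel :: (real\<times>real) measure)"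
  shows "(\<lambda>x. W a x :: real) \<in> borel_measurable borel"
proof -
  have "(\<lambda>x::real. (a, x)) \<in> borel \<rightarrow>\<^sub>M (borel \<Otimes>\<^sub>M borel)" by (intro measurable_Pair) auto
  from measurable_comp[OF this wm2[OF assms]] show ?thesis by (simp add: o_def)
qed

lemma inner1_meas:
  fixes W :: "real \<Rightarrow> real \<Rightarrow> real"
  assumes wm: "(\<lambda>p. W (fst p) (snd p)) \<in> borel_measurable borel"
  and A[measurable]: "A \<in> sets lebesgue"
  and f1[measurable]: "(\<lambda>p::real\<times>real. u p) \<in> borel_measurable lebesgue"
  and f2[measurable]: "(\<lambda>p::real\<times>real. v p) \<in> borel_measurable lebesgue"
  and f3[measurable]: "(\<lambda>p::real\<times>real. a p) \<in> borel_measurable lebesgue"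
  and f4[measurable]: "(\<lambda>p::real\<times>real. b p) \<in> borel_measurable lebesgue"
  shows "(\<lambda>p::real\<times>real. LINT x:(A \<inter> {a p..b p})|lebesgue. W x (u p) - W x (v p)) \<in> borel_measurable lebesgue"
proof -
  have wm2': "(\<lambda>p. W (fst p) (snd p)) \<in> (borel \<Otimes>\<^sub>M borel) \<rightarrow>\<^sub>M borel" using wm2[OF wm] .
  have lf[measurable]: "(\<lambda>q::(real\<times>real)\<times>real. f (fst q)) \<in> borel_measurable (lebesgue \<Otimes>\<^sub>M lebesgue)"
    if "f \<in> borel_measurable lebesgue" for f :: "real\<times>real \<Rightarrow> real"
    using measurable_comp[OF measurable_fst that] by (simp add: o_def)
  have f3'[measurable]: "(\<lambda>q::(real\<times>real)\<times>real. snd q) \<in> borel_measurable (lebesgue \<Otimes>\<^sub>M lebesgue)"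
    using measurable_comp[OF measurable_snd id_leb] by (simp add: o_def)
  have g: "(\<lambda>q::(real\<times>real)\<times>real. W (snd q) (f q)) \<in> borel_measurable (lebesgue \<Otimes>\<^sub>M lebesgue)"
    if "f \<in> borel_measurable (lebesgue \<Otimes>\<^sub>M lebesgue)" for f
  proof -
    have "(\<lambda>q::(real\<times>real)\<times>real. (snd q, f q)) \<in> (lebesgue \<Otimes>\<^sub>M lebesgue) \<rightarrow>\<^sub>M (borel \<Otimes>\<^sub>M borel)"
      using f3' that by (rule measurable_Pair)
    from measurable_comp[OF this wm2'] show ?thesis by (simp add: o_def)
  qed
  have g1[measurable]: "(\<lambda>q::(real\<times>real)\<times>real. W (snd q) (u (fst q))) \<in> borel_measurable (lebesgue \<Otimes>\<^sub>M lebesgue)"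
    by (rule g[OF lf[OF f1]])
  have g2[measurable]: "(\<lambda>q::(real\<times>real)\<times>real. W (snd q) (v (fst q))) \<in> borel_measurable (lebesgue \<Otimes>\<^sub>M lebesgue)"
    by (rule g[OF lf[OF f2]])
  have a'[measurable]: "(\<lambda>q::(real\<times>real)\<times>real. a (fst q)) \<in> borel_measurable (lebesgue \<Otimes>\<^sub>M lebesgue)"
    by (rule lf[OF f3])
  have b'[measurable]: "(\<lambda>q::(real\<times>real)\<times>real. b (fst q)) \<in> borel_measurable (lebesgue \<Otimes>\<^sub>M lebesgue)"
    by (rule lf[OF f4])
  have iA[measurable]: "(\<lambda>q::(real\<times>real)\<times>real. indicator A (snd q) :: real) \<in> borel_measurable (lebesgue \<Otimes>\<^sub>M lebesgue)"
    using measurable_comp[OF measurable_snd borel_measurable_indicator[OF A]] by (simp add: o_def)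
  have e: "(\<lambda>(p::real\<times>real, x::real). indicator (A \<inter> {a p..b p}) x *\<^sub>R (W x (u p) - W x (v p)))
     = (\<lambda>q. indicator A (snd q) * (if a (fst q) \<le> snd q \<and> snd q \<le> b (fst q) then 1 else 0) * (W (snd q) (u (fst q)) - W (snd q) (v (fst q))))"
    by (auto simp: fun_eq_iff indicator_def)
  have "(\<lambda>(p::real\<times>real, x::real). indicator (A \<inter> {a p..b p}) x *\<^sub>R (W x (u p) - W x (v p))) \<in> borel_measurable (lebesgue \<Otimes>\<^sub>M lebesgue)"
    unfolding e by measurable
  thus ?thesis using sigma_finite_measure.borel_measurable_lebesgue_integral[OF sf_leb] by (auto simp: set_lebesgue_integral_def)
qed

definition Tri :: "(real \<times> real) set" where "Tri = {(y,z). 0 \<le> y \<and> y < z \<and> z \<le> 1}"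

definition Phi1 :: "nat \<Rightarrow> (real \<Rightarrow> real \<Rightarrow> real) \<Rightarrow> (nat \<Rightarrow> real) \<Rightarrow> real \<times> real \<Rightarrow> real" where
  "Phi1 n W \<alpha> p = max 0 (\<Sum>i\<in>IS n 0 (fst p). (W (mid n i) (snd p) - W (mid n i) (fst p)) * \<alpha> i)"
definition Phi2 :: "nat \<Rightarrow> (real \<Rightarrow> real \<Rightarrow> real) \<Rightarrow> (nat \<Rightarrow> real) \<Rightarrow> real \<times> real \<Rightarrow> real" where
  "Phi2 n W \<alpha> p = max 0 (\<Sum>i\<in>IS n (snd p) 1. (W (mid n i) (fst p) - W (mid n i) (snd p)) * \<alpha> i)"
definition PhiT :: "nat \<Rightarrow> (real \<Rightarrow> real \<Rightarrow> real) \<Rightarrow> (nat \<Rightarrow> real) \<Rightarrow> real" where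
  "PhiT n W \<alpha> = (LINT p:Tri|lebesgue. Phi1 n W \<alpha> p) + (LINT p:Tri|lebesgue. Phi2 n W \<alpha> p)"
definition alpha :: "nat \<Rightarrow> real set \<Rightarrow> nat \<Rightarrow> real" where
  "alpha n A i = measure lebesgue (A \<inter> Jn n i)"

lemma Tri_sets[measurable]: "Tri \<in> sets lebesgue"
proof -
  have e: "Tri = {p. 0 \<le> fst p} \<inter> {p. fst p < snd p} \<inter> {p::real\<times>real. snd p \<le> 1}"
    by (auto simp: Tri_def)
  have c1: "closed {p::real\<times>real. 0 \<le> fst p}" by (intro closed_Collect_le continuous_intros)
  have c2: "open {p::real\<times>real. fst p < snd p}" by (intro open_Collect_less continuous_intros)
  have c3: "closed {p::real\<times>real. snd p \<le> 1}" by (intro closed_Collect_le continuous_intros)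
  have "Tri \<in> sets borel" unfolding e
    by (intro sets.Int borel_closed[OF c1] borel_open[OF c2] borel_closed[OF c3])
  hence "Tri \<in> sets lborel" by simp
  thus ?thesis by (rule sets_completionI_sets)
qed

lemma Tri_measure: "emeasure lebesgue Tri \<le> 1"
proof -
  have b: "{0..1::real} \<times> {0..1::real} \<in> sets lborel"
  proof -
    have "{0..1::real} \<times> {0..1::real} \<in> sets (borel \<Otimes>\<^sub>M borel)" by (intro pair_measureI) auto
    thus ?thesis using bp by simp
  qed
  have "emeasure lebesgue Tri \<le> emeasure lebesgue ({0..1::real} \<times> {0..1::real})"
    using b by (intro emeasure_mono) (auto simp: Tri_def)
  also have "\<dots> = emeasure lborel ({0..1::real} \<times> {0..1::real})"
    using b by (simp add: emeasure_completion)
  also have "\<dots> = emeasure (lborel \<Otimes>\<^sub>M lborel) ({0..1::real} \<times> {0..1::real})"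
    by (simp add: lborel_prod)
  also have "\<dots> = emeasure lborel {0..1::real} * emeasure lborel {0..1::real}"
    by (intro lborel.emeasure_pair_measure_Times) auto
  also have "\<dots> = 1" by simp
  finally show ?thesis .
qed

lemma sumbound:
  fixes W :: "real \<Rightarrow> real \<Rightarrow> real" and \<alpha> :: "nat \<Rightarrow> real"
  assumes "I \<subseteq> {..<n}" "\<And>a b. \<bar>W a b\<bar> \<le> c"
  shows "\<bar>\<Sum>i\<in>I. (W (mid n i) u - W (mid n i) v) * \<alpha> i\<bar> \<le> (\<Sum>i<n. 2 * c * \<bar>\<alpha> i\<bar>)"
proof -
  have c0: "0 \<le> c" using assms(2)[of 0 0] by simp
  have "\<bar>\<Sum>i\<in>I. (W (mid n i) u - W (mid n i) v) * \<alpha> i\<bar> \<le> (\<Sum>i\<in>I. \<bar>(W (mid n i) u - W (mid n i) v) * \<alpha> i\<bar>)"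
    by (rule sum_abs)
  also have "\<dots> \<le> (\<Sum>i\<in>I. 2 * c * \<bar>\<alpha> i\<bar>)"
  proof (rule sum_mono)
    fix i
    have "\<bar>W (mid n i) u - W (mid n i) v\<bar> \<le> 2 * c" using assms(2)[of "mid n i" u] assms(2)[of "mid n i" v] by linarith
    thus "\<bar>(W (mid n i) u - W (mid n i) v) * \<alpha> i\<bar> \<le> 2 * c * \<bar>\<alpha> i\<bar>" by (simp add: abs_mult mult_right_mono)
  qed
  also have "\<dots> \<le> (\<Sum>i<n. 2 * c * \<bar>\<alpha> i\<bar>)"
    using assms(1) c0 by (intro sum_mono2) auto
  finally show ?thesis .
qed

lemma IS_sum_if: "(\<Sum>i\<in>IS n s t. f i) = (\<Sum>i<n. if s \<le> real i / real n \<and> (real i + 1) / real n \<le> t then f i else 0)"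
proof -
  have "IS n s t = {i \<in> {..<n}. s \<le> real i / real n \<and> (real i + 1) / real n \<le> t}" by (auto simp: IS_def)
  moreover have "(\<Sum>i\<in>{i \<in> {..<n}. s \<le> real i / real n \<and> (real i + 1) / real n \<le> t}. f i) = (\<Sum>i<n. if s \<le> real i / real n \<and> (real i + 1) / real n \<le> t then f i else 0)"
    by (rule sum.inter_filter) simp
  ultimately show ?thesis by simp
qed

lemma Phi1_meas:
  assumes wm: "(\<lambda>p. W (fst p) (snd p)) \<in> borel_measurable (borel :: (real\<times>real) measure)"
  shows "Phi1 n W \<alpha> \<in> borel_measurable lebesgue"
proof -
  have [measurable]: "(\<lambda>p::real\<times>real. W a (snd p)) \<in> borel_measurable lebesgue" for a
    by (rule comp_snd_leb[OF W_sec2[OF wm]])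
  have [measurable]: "(\<lambda>p::real\<times>real. W a (fst p)) \<in> borel_measurable lebesgue" for a
    by (rule comp_fst_leb[OF W_sec2[OF wm]])
  have [measurable]: "fst \<in> borel_measurable (lebesgue :: (real\<times>real) measure)" by (rule fst_leb)
  have e: "Phi1 n W \<alpha> = (\<lambda>p. max 0 (\<Sum>i<n. if 0 \<le> real i / real n \<and> (real i + 1) / real n \<le> fst p then (W (mid n i) (snd p) - W (mid n i) (fst p)) * \<alpha> i else 0))"
    by (simp add: fun_eq_iff Phi1_def IS_sum_if)
  show ?thesis unfolding e by measurable
qed

lemma Phi2_meas:
  assumes wm: "(\<lambda>p. W (fst p) (snd p)) \<in> borel_measurable (borel :: (real\<times>real) measure)"
  shows "Phi2 n W \<alpha> \<in> borel_measurable lebesgue"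
proof -
  have [measurable]: "(\<lambda>p::real\<times>real. W a (snd p)) \<in> borel_measurable lebesgue" for a
    by (rule comp_snd_leb[OF W_sec2[OF wm]])
  have [measurable]: "(\<lambda>p::real\<times>real. W a (fst p)) \<in> borel_measurable lebesgue" for a
    by (rule comp_fst_leb[OF W_sec2[OF wm]])
  have [measurable]: "snd \<in> borel_measurable (lebesgue :: (real\<times>real) measure)" by (rule snd_leb)
  have e: "Phi2 n W \<alpha> = (\<lambda>p. max 0 (\<Sum>i<n. if snd p \<le> real i / real n \<and> (real i + 1) / real n \<le> 1 then (W (mid n i) (fst p) - W (mid n i) (snd p)) * \<alpha> i else 0))"
    by (simp add: fun_eq_iff Phi2_def IS_sum_if)
  show ?thesis unfolding e by measurable
qed

lemma set_int_close:
  fixes f g :: "real \<times> real \<Rightarrow> real"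
  assumes fm: "f \<in> borel_measurable lebesgue" and gm: "g \<in> borel_measurable lebesgue"
    and fb: "\<And>p. p \<in> Tri \<Longrightarrow> \<bar>f p\<bar> \<le> K" and gb: "\<And>p. p \<in> Tri \<Longrightarrow> \<bar>g p\<bar> \<le> K"
    and fg: "\<And>p. p \<in> Tri \<Longrightarrow> \<bar>f p - g p\<bar> \<le> e" and e0: "0 \<le> e"
  shows "\<bar>(LINT p:Tri|lebesgue. f p) - (LINT p:Tri|lebesgue. g p)\<bar> \<le> e"
proof -
  have Tf: "emeasure lebesgue Tri < \<infinity>" using Tri_measure by (simp add: order_le_less_trans)
  have iK: "integrable lebesgue (\<lambda>p. \<bar>K\<bar> * indicator Tri p :: real)" using Tf by auto
  have ie: "integrable lebesgue (\<lambda>p. e * indicator Tri p :: real)" using Tf by auto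
  have If: "integrable lebesgue (\<lambda>p. indicator Tri p *\<^sub>R f p)"
  proof (rule Bochner_Integration.integrable_bound[OF iK])
    show "(\<lambda>p. indicator Tri p *\<^sub>R f p) \<in> borel_measurable lebesgue" using fm by measurable
    show "AE p in lebesgue. norm (indicator Tri p *\<^sub>R f p) \<le> norm (\<bar>K\<bar> * indicator Tri p)"
    proof (rule AE_I2)
      fix p show "norm (indicator Tri p *\<^sub>R f p) \<le> norm (\<bar>K\<bar> * indicator Tri p)"
        using fb[of p] by (cases "p \<in> Tri") auto
    qed
  qed
  have Ig: "integrable lebesgue (\<lambda>p. indicator Tri p *\<^sub>R g p)"
  proof (rule Bochner_Integration.integrable_bound[OF iK])
    show "(\<lambda>p. indicator Tri p *\<^sub>R g p) \<in> borel_measurable lebesgue" using gm by measurable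
    show "AE p in lebesgue. norm (indicator Tri p *\<^sub>R g p) \<le> norm (\<bar>K\<bar> * indicator Tri p)"
    proof (rule AE_I2)
      fix p show "norm (indicator Tri p *\<^sub>R g p) \<le> norm (\<bar>K\<bar> * indicator Tri p)"
        using gb[of p] by (cases "p \<in> Tri") auto
    qed
  qed
  have "(LINT p:Tri|lebesgue. f p) - (LINT p:Tri|lebesgue. g p) = (\<integral>p. indicator Tri p *\<^sub>R f p - indicator Tri p *\<^sub>R g p \<partial>lebesgue)"
    unfolding set_lebesgue_integral_def by (rule Bochner_Integration.integral_diff[OF If Ig, symmetric])
  also have "\<bar>\<dots>\<bar> \<le> (\<integral>p. \<bar>indicator Tri p *\<^sub>R f p - indicator Tri p *\<^sub>R g p\<bar> \<partial>lebesgue)"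
    by (rule integral_abs_bound)
  also have "\<dots> \<le> (\<integral>p. e * indicator Tri p \<partial>lebesgue)"
    by (rule Bochner_Integration.integral_mono[OF integrable_abs[OF Bochner_Integration.integrable_diff[OF If Ig]] ie])
       (use fg e0 in \<open>auto simp: indicator_def\<close>)
  also have "\<dots> = e * measure lebesgue Tri" by simp
  also have "\<dots> \<le> e * 1"
  proof -
    have "measure lebesgue Tri \<le> 1" using Tri_measure Tf by (simp add: measure_def enn2real_leI)
    thus ?thesis using e0 by (intro mult_left_mono) auto
  qed
  finally show ?thesis by simp
qed

lemma wext_bound:
  assumes "\<forall>x\<in>{0..1}. \<forall>y\<in>{0..1}. \<bar>w x y\<bar> \<le> c" "0 < c"
  shows "\<bar>wext w a b\<bar> \<le> c"
  using assms by (auto simp: wext_def)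

lemma wext_Jn:
  assumes n: "n \<ge> 1" and wm: "(\<lambda>(x,y). w x y) \<in> borel_measurable (algN_measure n \<Otimes>\<^sub>M algN_measure n)"
    and i: "i < n" "x \<in> Jn n i"
  shows "wext w x z = wext w (mid n i) z"
proof (cases "z \<in> {0..1}")
  case True
  have m: "mid n i \<in> Jn n i" using mid_Jn[OF n] .
  have x01: "x \<in> {0..1}" "mid n i \<in> {0..1}" using Jn_01[OF n i(1)] i(2) m by auto
  have "eqvn n x (mid n i)" using Jn_eqvn[OF n i(2) m] .
  moreover have "eqvn n z z" by (simp add: eqvn_def)
  ultimately have "w x z = w (mid n i) z" using w_const[OF wm x01(1,2) _ True True] by blast
  thus ?thesis using x01 True unfolding wext_def by auto
next
  case False
  thus ?thesis by (auto simp: wext_def)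
qed

lemma maxabs: "\<bar>max 0 (a::real) - max 0 b\<bar> \<le> \<bar>a - b\<bar>" by (simp add: max_def abs_if)

lemma gamma_approx:
  assumes n: "n \<ge> 1" and c: "0 < c"
    and wm: "(\<lambda>(x,y). w x y) \<in> borel_measurable (algN_measure n \<Otimes>\<^sub>M algN_measure n)"
    and wb: "\<forall>x\<in>{0..1}. \<forall>y\<in>{0..1}. \<bar>w x y\<bar> \<le> c" and A: "A \<in> measSets"
  shows "\<bar>GammaW w A - PhiT n (wext w) (alpha n A)\<bar> \<le> 8 * c / real n"
proof -
  define W where "W = wext w"
  have AL: "A \<in> sets lebesgue" and A01: "A \<subseteq> {0..1}" using A by (auto simp: measSets_def)
  have Wm: "(\<lambda>p. W (fst p) (snd p)) \<in> borel_measurable borel" unfolding W_def by (rule wext_meas[OF wm])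
  have Wb: "\<bar>W a b\<bar> \<le> c" for a b unfolding W_def by (rule wext_bound[OF wb c])
  have WJ: "\<And>i x z. i < n \<Longrightarrow> x \<in> Jn n i \<Longrightarrow> W x z = W (mid n i) z" unfolding W_def by (rule wext_Jn[OF n wm])
  define inner1 where "inner1 p = (LINT x:(A \<inter> {0..fst p})|lebesgue. W x (snd p) - W x (fst p))" for p :: "real \<times> real"
  define inner2 where "inner2 p = (LINT x:(A \<inter> {snd p..1})|lebesgue. W x (fst p) - W x (snd p))" for p :: "real \<times> real"
  define \<alpha> where "\<alpha> = alpha n A"
  define K\<alpha> where "K\<alpha> = (\<Sum>i<n. 2 * c * \<bar>\<alpha> i\<bar>)"
  have np: "real n > 0" using n by simp
  have e0: "0 \<le> 4 * c / real n" using c np by simp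
  have G: "GammaW w A = (LINT p:Tri|lebesgue. max 0 (inner1 p)) + (LINT p:Tri|lebesgue. max 0 (inner2 p))"
  proof -
    have 1: "(LINT x:(A \<inter> {0..fst p})|lebesgue. w x (snd p) - w x (fst p)) = inner1 p" if p: "p \<in> Tri" for p
      unfolding inner1_def using p A01 AL
      by (intro set_lebesgue_integral_cong) (auto simp: W_def wext_def Tri_def)
    have 2: "(LINT x:(A \<inter> {snd p..1})|lebesgue. w x (fst p) - w x (snd p)) = inner2 p" if p: "p \<in> Tri" for p
      unfolding inner2_def using p A01 AL
      by (intro set_lebesgue_integral_cong) (auto simp: W_def wext_def Tri_def)
    have 3: "(LINT p:Tri|lebesgue. max 0 (LINT x:(A \<inter> {0..fst p})|lebesgue. w x (snd p) - w x (fst p))) = (LINT p:Tri|lebesgue. max 0 (inner1 p))"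
      by (rule set_lebesgue_integral_cong[OF Tri_sets]) (use 1 in auto)
    have 4: "(LINT p:Tri|lebesgue. max 0 (LINT x:(A \<inter> {snd p..1})|lebesgue. w x (fst p) - w x (snd p))) = (LINT p:Tri|lebesgue. max 0 (inner2 p))"
      by (rule set_lebesgue_integral_cong[OF Tri_sets]) (use 2 in auto)
    show ?thesis unfolding GammaW_def Tri_def[symmetric] 3 4 ..
  qed
  have ap1: "\<bar>inner1 p - (\<Sum>i\<in>IS n 0 (fst p). (W (mid n i) (snd p) - W (mid n i) (fst p)) * \<alpha> i)\<bar> \<le> 4 * c / real n"
    if p: "p \<in> Tri" for p
  proof -
    have hm: "(\<lambda>x. W x (snd p) - W x (fst p)) \<in> borel_measurable lebesgue"
      by (intro borel_leb borel_measurable_diff W_sec1[OF Wm])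
    have "\<bar>inner1 p - (\<Sum>i\<in>IS n 0 (fst p). (W (mid n i) (snd p) - W (mid n i) (fst p)) * measure lebesgue (A \<inter> Jn n i))\<bar> \<le> 2 * (2 * c) / real n"
      unfolding inner1_def
    proof (rule approx_int[OF n _ _ AL hm])
      show "0 \<le> (0::real)" by simp
      show "fst p \<le> 1" using p by (auto simp: Tri_def)
      show "\<bar>W x (snd p) - W x (fst p)\<bar> \<le> 2 * c" for x using Wb[of x "snd p"] Wb[of x "fst p"] by linarith
      show "W x (snd p) - W x (fst p) = W (mid n i) (snd p) - W (mid n i) (fst p)" if "i < n" "x \<in> Jn n i" for i x
        using WJ[OF that] by simp
    qed
    thus ?thesis by (simp add: \<alpha>_def alpha_def)
  qed
  have ap2: "\<bar>inner2 p - (\<Sum>i\<in>IS n (snd p) 1. (W (mid n i) (fst p) - W (mid n i) (snd p)) * \<alpha> i)\<bar> \<le> 4 * c / real n"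
    if p: "p \<in> Tri" for p
  proof -
    have hm: "(\<lambda>x. W x (fst p) - W x (snd p)) \<in> borel_measurable lebesgue"
      by (intro borel_leb borel_measurable_diff W_sec1[OF Wm])
    have "\<bar>inner2 p - (\<Sum>i\<in>IS n (snd p) 1. (W (mid n i) (fst p) - W (mid n i) (snd p)) * measure lebesgue (A \<inter> Jn n i))\<bar> \<le> 2 * (2 * c) / real n"
      unfolding inner2_def
    proof (rule approx_int[OF n _ _ AL hm])
      show "0 \<le> snd p" using p by (auto simp: Tri_def)
      show "(1::real) \<le> 1" by simp
      show "\<bar>W x (fst p) - W x (snd p)\<bar> \<le> 2 * c" for x using Wb[of x "snd p"] Wb[of x "fst p"] by linarith
      show "W x (fst p) - W x (snd p) = W (mid n i) (fst p) - W (mid n i) (snd p)" if "i < n" "x \<in> Jn n i" for i x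
        using WJ[OF that] by simp
    qed
    thus ?thesis by (simp add: \<alpha>_def alpha_def)
  qed
  have ISn: "IS n s t \<subseteq> {..<n}" for s t by (auto simp: IS_def)
  have sb1: "\<bar>\<Sum>i\<in>IS n 0 (fst p). (W (mid n i) (snd p) - W (mid n i) (fst p)) * \<alpha> i\<bar> \<le> K\<alpha>" for p
    unfolding K\<alpha>_def by (rule sumbound[OF ISn Wb])
  have sb2: "\<bar>\<Sum>i\<in>IS n (snd p) 1. (W (mid n i) (fst p) - W (mid n i) (snd p)) * \<alpha> i\<bar> \<le> K\<alpha>" for p
    unfolding K\<alpha>_def by (rule sumbound[OF ISn Wb])
  have K0: "0 \<le> K\<alpha>" using sb1[of 0] by linarith
  have fst_m: "fst \<in> borel_measurable (lebesgue :: (real\<times>real) measure)" by (rule fst_leb)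
  have snd_m: "snd \<in> borel_measurable (lebesgue :: (real\<times>real) measure)" by (rule snd_leb)
  have i1m: "(\<lambda>p. max 0 (inner1 p)) \<in> borel_measurable lebesgue"
  proof -
    have "(\<lambda>p::real\<times>real. LINT x:(A \<inter> {(\<lambda>p. 0) p..fst p})|lebesgue. W x (snd p) - W x (fst p)) \<in> borel_measurable lebesgue"
      by (rule inner1_meas[OF Wm AL snd_m fst_m _ fst_m]) simp
    thus ?thesis unfolding inner1_def by measurable
  qed
  have i2m: "(\<lambda>p. max 0 (inner2 p)) \<in> borel_measurable lebesgue"
  proof -
    have "(\<lambda>p::real\<times>real. LINT x:(A \<inter> {snd p..(\<lambda>p. 1) p})|lebesgue. W x (fst p) - W x (snd p)) \<in> borel_measurable lebesgue"
      by (rule inner1_meas[OF Wm AL fst_m snd_m snd_m]) simp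
    thus ?thesis unfolding inner2_def by measurable
  qed
  have c1: "\<bar>(LINT p:Tri|lebesgue. max 0 (inner1 p)) - (LINT p:Tri|lebesgue. Phi1 n W \<alpha> p)\<bar> \<le> 4 * c / real n"
  proof (rule set_int_close[OF i1m Phi1_meas[OF Wm] _ _ _ e0])
    fix p assume p: "p \<in> Tri"
    show "\<bar>max 0 (inner1 p)\<bar> \<le> K\<alpha> + 4 * c / real n" using ap1[OF p] sb1[of p] unfolding max_def by (smt (verit))
    show "\<bar>Phi1 n W \<alpha> p\<bar> \<le> K\<alpha> + 4 * c / real n" using sb1[of p] e0 unfolding Phi1_def max_def by (smt (verit))
    show "\<bar>max 0 (inner1 p) - Phi1 n W \<alpha> p\<bar> \<le> 4 * c / real n"
      unfolding Phi1_def using maxabs ap1[OF p] order_trans by blast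
  qed
  have c2: "\<bar>(LINT p:Tri|lebesgue. max 0 (inner2 p)) - (LINT p:Tri|lebesgue. Phi2 n W \<alpha> p)\<bar> \<le> 4 * c / real n"
  proof (rule set_int_close[OF i2m Phi2_meas[OF Wm] _ _ _ e0])
    fix p assume p: "p \<in> Tri"
    show "\<bar>max 0 (inner2 p)\<bar> \<le> K\<alpha> + 4 * c / real n" using ap2[OF p] sb2[of p] unfolding max_def by (smt (verit))
    show "\<bar>Phi2 n W \<alpha> p\<bar> \<le> K\<alpha> + 4 * c / real n" using sb2[of p] e0 unfolding Phi2_def max_def by (smt (verit))
    show "\<bar>max 0 (inner2 p) - Phi2 n W \<alpha> p\<bar> \<le> 4 * c / real n"
      unfolding Phi2_def using maxabs ap2[OF p] order_trans by blast
  qed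
  have "\<bar>GammaW w A - PhiT n W \<alpha>\<bar> \<le> 4 * c / real n + 4 * c / real n"
    using c1 c2 unfolding G PhiT_def by linarith
  thus ?thesis by (simp add: W_def \<alpha>_def)
qed

lemma Tri_integrable:
  fixes f :: "real \<times> real \<Rightarrow> real"
  assumes fm: "f \<in> borel_measurable lebesgue" and fb: "\<And>p. p \<in> Tri \<Longrightarrow> \<bar>f p\<bar> \<le> K"
  shows "integrable lebesgue (\<lambda>p. indicator Tri p *\<^sub>R f p)"
proof -
  have Tf: "emeasure lebesgue Tri < \<infinity>" using Tri_measure by (simp add: order_le_less_trans)
  have iK: "integrable lebesgue (\<lambda>p. \<bar>K\<bar> * indicator Tri p :: real)" using Tf by auto
  show ?thesis
  proof (rule Bochner_Integration.integrable_bound[OF iK])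
    show "(\<lambda>p. indicator Tri p *\<^sub>R f p) \<in> borel_measurable lebesgue" using fm by measurable
    show "AE p in lebesgue. norm (indicator Tri p *\<^sub>R f p) \<le> norm (\<bar>K\<bar> * indicator Tri p)"
    proof (rule AE_I2)
      fix p show "norm (indicator Tri p *\<^sub>R f p) \<le> norm (\<bar>K\<bar> * indicator Tri p)"
        using fb[of p] by (cases "p \<in> Tri") auto
    qed
  qed
qed

lemma maxconv: "0 \<le> s \<Longrightarrow> s \<le> 1 \<Longrightarrow> max 0 ((1 - s) * a + s * b) \<le> (1 - s) * max 0 a + s * max (0::real) b"
  unfolding max_def by (smt (verit) mult_nonneg_nonneg mult_left_mono mult_right_mono)

lemma int_conv:
  fixes f g h :: "real \<times> real \<Rightarrow> real"
  assumes "integrable lebesgue (\<lambda>p. indicator Tri p *\<^sub>R f p)" "integrable lebesgue (\<lambda>p. indicator Tri p *\<^sub>R g p)"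
    "integrable lebesgue (\<lambda>p. indicator Tri p *\<^sub>R h p)"
    "\<And>p. h p \<le> (1 - s) * f p + s * g p"
  shows "(LINT p:Tri|lebesgue. h p) \<le> (1 - s) * (LINT p:Tri|lebesgue. f p) + s * (LINT p:Tri|lebesgue. g p)"
proof -
  have i1: "integrable lebesgue (\<lambda>p. (1 - s) * (indicator Tri p *\<^sub>R f p))" using assms(1) by simp
  have i2: "integrable lebesgue (\<lambda>p. s * (indicator Tri p *\<^sub>R g p))" using assms(2) by simp
  have "(LINT p:Tri|lebesgue. h p) \<le> (\<integral>p. (1 - s) * (indicator Tri p *\<^sub>R f p) + s * (indicator Tri p *\<^sub>R g p) \<partial>lebesgue)"
    unfolding set_lebesgue_integral_def
    by (rule Bochner_Integration.integral_mono[OF assms(3) Bochner_Integration.integrable_add[OF i1 i2]])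
       (use assms(4) in \<open>auto simp: indicator_def\<close>)
  also have "\<dots> = (1 - s) * (LINT p:Tri|lebesgue. f p) + s * (LINT p:Tri|lebesgue. g p)"
    unfolding set_lebesgue_integral_def
    by (subst Bochner_Integration.integral_add[OF i1 i2]) simp
  finally show ?thesis .
qed

lemma PhiT_convex:
  fixes W :: "real \<Rightarrow> real \<Rightarrow> real"
  assumes Wm: "(\<lambda>p. W (fst p) (snd p)) \<in> borel_measurable borel" and Wb: "\<And>a b. \<bar>W a b\<bar> \<le> c"
    and s: "0 \<le> s" "s \<le> 1"
  shows "PhiT n W (\<lambda>i. (1 - s) * \<beta>0 i + s * \<beta>1 i) \<le> (1 - s) * PhiT n W \<beta>0 + s * PhiT n W \<beta>1"
proof -
  have ISn: "IS n u v \<subseteq> {..<n}" for u v by (auto simp: IS_def)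
  have I1: "integrable lebesgue (\<lambda>p. indicator Tri p *\<^sub>R Phi1 n W \<alpha> p)" for \<alpha>
  proof (rule Tri_integrable[OF Phi1_meas[OF Wm]])
    fix p show "\<bar>Phi1 n W \<alpha> p\<bar> \<le> (\<Sum>i<n. 2 * c * \<bar>\<alpha> i\<bar>)"
      using sumbound[where W=W and I="IS n 0 (fst p)" and n=n and u="snd p" and v="fst p" and \<alpha>=\<alpha>, OF ISn Wb] unfolding Phi1_def max_def by (smt (verit))
  qed
  have I2: "integrable lebesgue (\<lambda>p. indicator Tri p *\<^sub>R Phi2 n W \<alpha> p)" for \<alpha>
  proof (rule Tri_integrable[OF Phi2_meas[OF Wm]])
    fix p show "\<bar>Phi2 n W \<alpha> p\<bar> \<le> (\<Sum>i<n. 2 * c * \<bar>\<alpha> i\<bar>)"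
      using sumbound[where W=W and I="IS n (snd p) 1" and n=n and u="fst p" and v="snd p" and \<alpha>=\<alpha>, OF ISn Wb] unfolding Phi2_def max_def by (smt (verit))
  qed
  have lin: "(\<Sum>i\<in>I. d i * ((1 - s) * \<beta>0 i + s * \<beta>1 i)) = (1 - s) * (\<Sum>i\<in>I. d i * \<beta>0 i) + s * (\<Sum>i\<in>I. d i * \<beta>1 i)" for I and d :: "nat \<Rightarrow> real"
  proof -
    have "(\<Sum>i\<in>I. d i * ((1 - s) * \<beta>0 i + s * \<beta>1 i)) = (\<Sum>i\<in>I. (1 - s) * (d i * \<beta>0 i) + s * (d i * \<beta>1 i))"
      by (intro sum.cong) (simp_all add: algebra_simps)
    also have "\<dots> = (1 - s) * (\<Sum>i\<in>I. d i * \<beta>0 i) + s * (\<Sum>i\<in>I. d i * \<beta>1 i)"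
      by (simp add: sum.distrib sum_distrib_left)
    finally show ?thesis .
  qed
  have p1: "Phi1 n W (\<lambda>i. (1 - s) * \<beta>0 i + s * \<beta>1 i) p \<le> (1 - s) * Phi1 n W \<beta>0 p + s * Phi1 n W \<beta>1 p" for p
    unfolding Phi1_def lin using maxconv[OF s] .
  have p2: "Phi2 n W (\<lambda>i. (1 - s) * \<beta>0 i + s * \<beta>1 i) p \<le> (1 - s) * Phi2 n W \<beta>0 p + s * Phi2 n W \<beta>1 p" for p
    unfolding Phi2_def lin using maxconv[OF s] .
  have "(LINT p:Tri|lebesgue. Phi1 n W (\<lambda>i. (1 - s) * \<beta>0 i + s * \<beta>1 i) p) \<le> (1 - s) * (LINT p:Tri|lebesgue. Phi1 n W \<beta>0 p) + s * (LINT p:Tri|lebesgue. Phi1 n W \<beta>1 p)"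
    by (rule int_conv[OF I1 I1 I1 p1])
  moreover have "(LINT p:Tri|lebesgue. Phi2 n W (\<lambda>i. (1 - s) * \<beta>0 i + s * \<beta>1 i) p) \<le> (1 - s) * (LINT p:Tri|lebesgue. Phi2 n W \<beta>0 p) + s * (LINT p:Tri|lebesgue. Phi2 n W \<beta>1 p)"
    by (rule int_conv[OF I2 I2 I2 p2])
  ultimately show ?thesis unfolding PhiT_def by (simp add: algebra_simps)
qed

lemma PhiT_cong:
  assumes "\<And>i. i < n \<Longrightarrow> \<alpha> i = \<beta> i"
  shows "PhiT n W \<alpha> = PhiT n W \<beta>"
proof -
  have "Phi1 n W \<alpha> = Phi1 n W \<beta>" "Phi2 n W \<alpha> = Phi2 n W \<beta>"
    using assms unfolding Phi1_def Phi2_def by (auto simp: fun_eq_iff IS_def intro!: sum.cong arg_cong[where f="max 0"])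
  thus ?thesis by (simp add: PhiT_def)
qed

lemma PhiT_vertex:
  fixes W :: "real \<Rightarrow> real \<Rightarrow> real"
  assumes Wm: "(\<lambda>p. W (fst p) (snd p)) \<in> borel_measurable borel" and Wb: "\<And>a b. \<bar>W a b\<bar> \<le> c"
    and n: "n \<ge> 1" and box: "\<And>i. i < n \<Longrightarrow> 0 \<le> \<alpha> i \<and> \<alpha> i \<le> 1 / real n"
  shows "\<exists>K \<subseteq> {..<n}. PhiT n W \<alpha> \<le> PhiT n W (\<lambda>i. if i \<in> K then 1 / real n else 0)"
proof -
  have np: "real n > 0" using n by simp
  have P: "\<exists>\<beta>. (\<forall>i<n. 0 \<le> \<beta> i \<and> \<beta> i \<le> 1 / real n) \<and> (\<forall>i<k. i < n \<longrightarrow> \<beta> i = 0 \<or> \<beta> i = 1 / real n) \<and> PhiT n W \<alpha> \<le> PhiT n W \<beta>" for k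
  proof (induction k)
    case 0
    show ?case using box by (intro exI[of _ \<alpha>]) auto
  next
    case (Suc k)
    then obtain \<beta> where b: "\<forall>i<n. 0 \<le> \<beta> i \<and> \<beta> i \<le> 1 / real n" "\<forall>i<k. i < n \<longrightarrow> \<beta> i = 0 \<or> \<beta> i = 1 / real n" "PhiT n W \<alpha> \<le> PhiT n W \<beta>"
      by blast
    show ?case
    proof (cases "k < n")
      case False
      thus ?thesis using b by (intro exI[of _ \<beta>]) (auto simp: less_Suc_eq)
    next
      case True
      define s where "s = real n * \<beta> k"
      have s: "0 \<le> s" "s \<le> 1" using b(1) True np by (auto simp: s_def field_simps)
      define \<beta>0 where "\<beta>0 = \<beta>(k := 0)"
      define \<beta>1 where "\<beta>1 = \<beta>(k := 1 / real n)"
      have eq: "\<beta> = (\<lambda>i. (1 - s) * \<beta>0 i + s * \<beta>1 i)"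
        using np by (auto simp: fun_eq_iff \<beta>0_def \<beta>1_def s_def algebra_simps)
      have "PhiT n W \<beta> \<le> (1 - s) * PhiT n W \<beta>0 + s * PhiT n W \<beta>1"
        by (subst eq) (rule PhiT_convex[OF Wm Wb s])
      also have "\<dots> \<le> max (PhiT n W \<beta>0) (PhiT n W \<beta>1)"
      proof -
        have "(1 - s) * PhiT n W \<beta>0 \<le> (1 - s) * max (PhiT n W \<beta>0) (PhiT n W \<beta>1)" using s by (intro mult_left_mono) auto
        moreover have "s * PhiT n W \<beta>1 \<le> s * max (PhiT n W \<beta>0) (PhiT n W \<beta>1)" using s by (intro mult_left_mono) auto
        ultimately show ?thesis by (simp add: algebra_simps)
      qed
      finally have le: "PhiT n W \<beta> \<le> max (PhiT n W \<beta>0) (PhiT n W \<beta>1)" .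
      have box0: "\<forall>i<n. 0 \<le> \<beta>0 i \<and> \<beta>0 i \<le> 1 / real n" "\<forall>i<Suc k. i < n \<longrightarrow> \<beta>0 i = 0 \<or> \<beta>0 i = 1 / real n"
        using b np by (auto simp: \<beta>0_def less_Suc_eq)
      have box1: "\<forall>i<n. 0 \<le> \<beta>1 i \<and> \<beta>1 i \<le> 1 / real n" "\<forall>i<Suc k. i < n \<longrightarrow> \<beta>1 i = 0 \<or> \<beta>1 i = 1 / real n"
        using b np by (auto simp: \<beta>1_def less_Suc_eq)
      show ?thesis
      proof (cases "PhiT n W \<beta>0 \<le> PhiT n W \<beta>1")
        case True
        thus ?thesis using box1 b(3) le by (intro exI[of _ \<beta>1]) auto
      next
        case False
        thus ?thesis using box0 b(3) le by (intro exI[of _ \<beta>0]) auto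
      qed
    qed
  qed
  obtain \<beta> where b: "\<forall>i<n. 0 \<le> \<beta> i \<and> \<beta> i \<le> 1 / real n" "\<forall>i<n. i < n \<longrightarrow> \<beta> i = 0 \<or> \<beta> i = 1 / real n" "PhiT n W \<alpha> \<le> PhiT n W \<beta>"
    using P[of n] by blast
  define K where "K = {i. i < n \<and> \<beta> i = 1 / real n}"
  have "PhiT n W \<beta> = PhiT n W (\<lambda>i. if i \<in> K then 1 / real n else 0)"
    using b(2) by (intro PhiT_cong) (auto simp: K_def)
  moreover have "K \<subseteq> {..<n}" by (auto simp: K_def)
  ultimately show ?thesis using b(3) by auto
qed

lemma Jn_measure: "n \<ge> 1 \<Longrightarrow> measure lebesgue (Jn n i) = 1 / real n"
proof -
  have e: "(real i + 1) / real n - real i / real n = 1 / real n" by (simp add: diff_divide_distrib[symmetric])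
  assume "n \<ge> 1"
  thus ?thesis using e by (simp add: Jn_def measure_def emeasure_completion divide_right_mono)
qed

lemma alpha_box:
  assumes n: "n \<ge> 1" and A: "A \<in> sets lebesgue"
  shows "0 \<le> alpha n A i \<and> alpha n A i \<le> 1 / real n"
proof -
  have "emeasure lebesgue (Jn n i) < \<infinity>"
    by (rule e_sub[of "Jn n i" "real i / real n" "(real i + 1) / real n"]) (auto simp: Jn_def)
  hence "Jn n i \<in> fmeasurable lebesgue" by (simp add: fmeasurable_def)
  hence "measure lebesgue (A \<inter> Jn n i) \<le> measure lebesgue (Jn n i)"
    using A by (intro measure_mono_fmeasurable) auto
  thus ?thesis using Jn_measure[OF n] by (simp add: alpha_def)
qed

theorem mainTheorem6:
  shows "\<exists>C::real. \<forall>(n::nat) (c::real) (w::real \<Rightarrow> real \<Rightarrow> real).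
      n \<ge> 1 \<longrightarrow> c > 0 \<longrightarrow> w \<in> graphonW
      \<longrightarrow> (\<forall>x\<in>{0..1}. \<forall>y\<in>{0..1}. \<bar>w x y\<bar> \<le> c)
      \<longrightarrow> (\<lambda>(x,y). w x y) \<in> borel_measurable (algN_measure n \<Otimes>\<^sub>M algN_measure n)
      \<longrightarrow> \<bar>GammaSup w - Max (GammaW w ` algN n)\<bar> \<le> C * c / real n"
proof (intro exI[of _ 16] allI impI)
  fix n :: nat and c :: real and w :: "real \<Rightarrow> real \<Rightarrow> real"
  assume n: "n \<ge> 1" and c: "c > 0" and "w \<in> graphonW" and wb: "\<forall>x\<in>{0..1}. \<forall>y\<in>{0..1}. \<bar>w x y\<bar> \<le> c"
    and wm: "(\<lambda>(x,y). w x y) \<in> borel_measurable (algN_measure n \<Otimes>\<^sub>M algN_measure n)"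
  define W where "W = wext w"
  define M where "M = Max (GammaW w ` algN n)"
  have Wm: "(\<lambda>p. W (fst p) (snd p)) \<in> borel_measurable borel" unfolding W_def by (rule wext_meas[OF wm])
  have Wb: "\<bar>W a b\<bar> \<le> c" for a b unfolding W_def by (rule wext_bound[OF wb c])
  have fin: "finite (GammaW w ` algN n)" using finite_algN by simp
  have ne: "algN n \<noteq> {}" unfolding algN_def using sigma_sets.Empty by blast
  have key: "GammaW w A \<le> M + 16 * c / real n" if A: "A \<in> measSets" for A
  proof -
    have AL: "A \<in> sets lebesgue" using A by (simp add: measSets_def)
    obtain K where K: "K \<subseteq> {..<n}" "PhiT n W (alpha n A) \<le> PhiT n W (\<lambda>i. if i \<in> K then 1 / real n else 0)"
      using PhiT_vertex[OF Wm Wb n, of "alpha n A"] alpha_box[OF n AL] by blast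
    have V: "VS n K \<in> algN n" by (rule VS_algN[OF K(1)])
    have VM: "VS n K \<in> measSets" using V algN_measSets by blast
    have "PhiT n W (\<lambda>i. if i \<in> K then 1 / real n else 0) = PhiT n W (alpha n (VS n K))"
      by (intro PhiT_cong) (simp add: alpha_def VS_Jn[OF n])
    hence le: "PhiT n W (alpha n A) \<le> PhiT n W (alpha n (VS n K))" using K(2) by simp
    have a1: "\<bar>GammaW w A - PhiT n W (alpha n A)\<bar> \<le> 8 * c / real n"
      unfolding W_def by (rule gamma_approx[OF n c wm wb A])
    have a2: "\<bar>GammaW w (VS n K) - PhiT n W (alpha n (VS n K))\<bar> \<le> 8 * c / real n"
      unfolding W_def by (rule gamma_approx[OF n c wm wb VM])
    have "GammaW w (VS n K) \<le> M" unfolding M_def using fin V by (intro Max_ge) auto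
    thus ?thesis using a1 a2 le by (simp add: abs_le_iff)
  qed
  have mne: "measSets \<noteq> {}" using ne algN_measSets by blast
  have bdd: "bdd_above (GammaW w ` measSets)" using key by (intro bdd_aboveI2) auto
  have up: "GammaSup w \<le> M + 16 * c / real n"
    unfolding GammaSup_def by (rule cSUP_least[OF mne key])
  have "M \<in> GammaW w ` algN n" unfolding M_def using fin ne by (intro Max_in) auto
  then obtain A0 where A0: "A0 \<in> algN n" "M = GammaW w A0" by blast
  have lo: "M \<le> GammaSup w"
    unfolding GammaSup_def A0(2) using A0(1) algN_measSets bdd by (intro cSUP_upper) auto
  show "\<bar>GammaSup w - Max (GammaW w ` algN n)\<bar> \<le> 16 * c / real n"
    using up lo unfolding M_def[symmetric] by (simp add: abs_le_iff)
qed

end
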